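(* Let $n,p\ge1$, $\mathbf{X}\in\mathbb{R}^{n\times p}$ fixed, $\beta^0\in\mathbb{R}^p$, and $\mathbf{Y}=\mathbf{X}\beta^0+\varepsilon$ with $\varepsilon_i$ i.i.d. $\mathcal{N}(0,\sigma^2)$, $\sigma>0$. Let $\lambda>0$ with $\Omega_{\min}(\lambda)>0$, let $\hat\beta_{\mathrm{init}}$ be an estimator of $\beta^0$, and assume (A'): there are constants $\Delta_j>0$ and $0<\kappa<1$ such that $$\mathbb{P}\Big[\bigcap_{j=1}^{p}\Big\{\Big|a_{n,p;j}(\sigma)\sum_{k\neq j}(P_{\mathbf{X}})_{jk}(\hat\beta_{\mathrm{init};k}-\beta^0_k)\Big|\le\Delta_j\Big\}\Big]\ge1-\kappa.$$ Let $Z=\hat\beta-\mathbb{E}[\hat\beta]$, so $Z\sim\mathcal{N}_p(0,n^{-1}\sigma^2\Omega(\lambda))$. Then $$\|a_{n,p}b(\lambda)\|_\infty:=\max_{1\le j\le p}a_{n,p;j}(\sigma)|b_j(\lambda)|\le\frac{\lambda}{\Omega_{\min}(\lambda)^{1/2}}\,n^{1/2}\sigma^{-1}\|\theta^0\|_2\,\lambda_{\min\neq0}(\hat\Sigma)^{-1},$$ and with probability at least $1-\kappa$ the following hold simultaneously: for every $j$ with $\beta^0_j=0$, $a_{n,p;j}(\sigma)|\hat\beta_{\mathrm{corr};j}|\le a_{n,p;j}(\sigma)|Z_j|+\Delta_j+\|a_{n,p}b(\lambda)\|_\infty$; and for every $G\subseteq\{1,\ldots,p\}$ with $\beta^0_j=0$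 for all $j\in G$, $\max_{j\in G}a_{n,p;j}(\sigma)|\hat\beta_{\mathrm{corr};j}|\le\max_{j\in G}\big(a_{n,p;j}(\sigma)|Z_j|+\Delta_j\big)+\|a_{n,p}b(\lambda)\|_\infty$.
   Context: $\hat\Sigma=n^{-1}\mathbf{X}^T\mathbf{X}$; $P_{\mathbf{X}}=\mathbf{X}^T(\mathbf{X}\mathbf{X}^T)^{-}\mathbf{X}$ (Moore–Penrose pseudo-inverse); $\theta^0=P_{\mathbf{X}}\beta^0$; $\Omega(\lambda)=(\hat\Sigma+\lambda I)^{-1}\hat\Sigma(\hat\Sigma+\lambda I)^{-1}$, $\Omega_{\min}(\lambda)=\min_j\Omega_{jj}(\lambda)$; $\lambda_{\min\neq0}(A)$ = smallest nonzero eigenvalue of symmetric $A$; $a_{n,p;j}(\sigma)=n^{1/2}\sigma^{-1}\Omega_{jj}(\lambda)^{-1/2}$. Ridge $\hat\beta=(\hat\Sigma+\lambda I)^{-1}n^{-1}\mathbf{X}^T\mathbf{Y}$; $b_j(\lambda)=\mathbb{E}[\hat\beta_j]-\theta^0_j$; $\hat\beta_{\mathrm{corr};j}=\hat\beta_j-\sum_{k\neq j}(P_{\mathbf{X}})_{jk}\hat\beta_{\mathrm{init};k}$. *)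

theory Defs
  imports "HOL-Analysis.Analysis" "HOL-Probability.Probability"
begin

text \<open>Moore--Penrose pseudo-inverse, defined by the four Penrose conditions.\<close>
definition mp_pinv :: "real^'m^'k \<Rightarrow> real^'k^'m" where
  "mp_pinv A = (THE B. A ** B ** A = A \<and> B ** A ** B = B \<and>
                      transpose (A ** B) = A ** B \<and> transpose (B ** A) = B ** A)"

text \<open>Design matrix X has n rows (index type 'n) and p columns (index type 'p).\<close>
definition Sigma_hat :: "real^'p^'n \<Rightarrow> real^'p^'p" where
  "Sigma_hat X = inverse (real CARD('n)) *\<^sub>R (transpose X ** X)"

definition proj_X :: "real^'p^'n \<Rightarrow> real^'p^'p" where
  "proj_X X = transpose X ** mp_pinv (X ** transpose X) ** X"

definition Omega :: "real^'p^'n \<Rightarrow> real \<Rightarrow> real^'p^'p" where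
  "Omega X lam = matrix_inv (Sigma_hat X + lam *\<^sub>R mat 1) ** Sigma_hat X
                 ** matrix_inv (Sigma_hat X + lam *\<^sub>R mat 1)"

definition Omega_min :: "real^'p^'n \<Rightarrow> real \<Rightarrow> real" where
  "Omega_min X lam = Min (range (\<lambda>j. Omega X lam $ j $ j))"

text \<open>Smallest nonzero eigenvalue of a (symmetric) square matrix.\<close>
definition min_nonzero_eig :: "real^'p^'p \<Rightarrow> real" where
  "min_nonzero_eig A = Min {\<mu>. \<mu> \<noteq> 0 \<and> (\<exists>v. v \<noteq> 0 \<and> A *v v = \<mu> *\<^sub>R v)}"

definition a_coef :: "real^'p^'n \<Rightarrow> real \<Rightarrow> real \<Rightarrow> 'p \<Rightarrow> real" where
  "a_coef X lam \<sigma> j = sqrt (real CARD('n)) / \<sigma> / sqrt (Omega X lam $ j $ j)"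

text \<open>Ridge estimator as a function of the response vector Y.\<close>
definition ridge :: "real^'p^'n \<Rightarrow> real \<Rightarrow> real^'n \<Rightarrow> real^'p" where
  "ridge X lam Y = matrix_inv (Sigma_hat X + lam *\<^sub>R mat 1)
                     *v (inverse (real CARD('n)) *\<^sub>R (transpose X *v Y))"

text \<open>Law of the noise vector: i.i.d. N(0, sigma^2) coordinates.\<close>
definition gauss_noise :: "real \<Rightarrow> (real^'n) measure" where
  "gauss_noise \<sigma> = density lborel (\<lambda>e. \<Prod>i\<in>UNIV. ennreal (normal_density 0 \<sigma> (e $ i)))"

end

theory Submission
  imports Defs
begin
lemma Basis_cart_real: "(Basis :: (real^'n) set) = (\<lambda>i. axis i 1) ` UNIV"
  by (auto simp: Basis_vec_def)

lemma inj_axis1: "inj (\<lambda>i::'n::finite. axis i (1::real))"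
  by (auto simp: inj_def axis_eq_axis)

lemma nn_integral_cart_prod:
  fixes g :: "'n::finite \<Rightarrow> real \<Rightarrow> real"
  assumes [measurable]: "\<And>i. g i \<in> borel_measurable borel"
    and nn: "\<And>i x. 0 \<le> g i x"
  shows "(\<integral>\<^sup>+e. (\<Prod>i\<in>UNIV. ennreal (g i (e $ i))) \<partial>(lborel :: (real^'n) measure))
       = (\<Prod>i\<in>UNIV. \<integral>\<^sup>+x. ennreal (g i x) \<partial>lborel)"
proof -
  define f where "f b = (\<lambda>x. ennreal (g (SOME i. b = axis i 1) x))" for b :: "real^'n"
  have fa: "f (axis i 1) = (\<lambda>x. ennreal (g i x))" for i
  proof -
    have "(SOME j. axis i (1::real) = axis j 1) = i"
      by (rule some_equality) (auto simp: axis_eq_axis)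
    then show ?thesis by (simp add: f_def)
  qed
  have "(\<integral>\<^sup>+e. (\<Prod>b\<in>Basis. f b (e \<bullet> b)) \<partial>(lborel :: (real^'n) measure)) = (\<Prod>b\<in>Basis. (\<integral>\<^sup>+x. f b x \<partial>lborel))"
    by (rule nn_integral_lborel_prod) (auto simp: Basis_cart_real fa)
  moreover have "(\<Prod>b\<in>Basis. f b (e \<bullet> b)) = (\<Prod>i\<in>UNIV. ennreal (g i (e $ i)))" for e :: "real^'n"
    unfolding Basis_cart_real by (subst prod.reindex[OF inj_axis1]) (simp add: fa cart_eq_inner_axis)
  moreover have "(\<Prod>b\<in>Basis. (\<integral>\<^sup>+x. f b x \<partial>lborel)) = (\<Prod>i\<in>UNIV. \<integral>\<^sup>+x. ennreal (g i x) \<partial>lborel)"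
    unfolding Basis_cart_real by (subst prod.reindex[OF inj_axis1]) (simp add: fa)
  ultimately show ?thesis by simp
qed

definition gd :: "real \<Rightarrow> real^'n::finite \<Rightarrow> real" where
  "gd \<sigma> e = (\<Prod>i\<in>UNIV. normal_density 0 \<sigma> (e $ i))"

lemma gd_nonneg: "0 \<le> gd \<sigma> e" by (simp add: gd_def prod_nonneg)

lemma gd_meas[measurable]: "gd \<sigma> \<in> borel_measurable borel"
  unfolding gd_def by measurable

lemma gauss_noise_eq: "gauss_noise \<sigma> = density lborel (\<lambda>e. ennreal (gd \<sigma> e))"
  unfolding gauss_noise_def gd_def by (subst prod_ennreal) auto

lemma nn_normal: "\<sigma> > 0 \<Longrightarrow> (\<integral>\<^sup>+x. ennreal (normal_density 0 \<sigma> x) \<partial>lborel) = 1"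
  by (subst nn_integral_eq_integral) auto

lemma gauss_prob: "\<sigma> > 0 \<Longrightarrow> prob_space (gauss_noise \<sigma> :: (real^'n::finite) measure)"
  apply (rule prob_spaceI)
  apply (simp add: gauss_noise_def emeasure_density)
  apply (subst nn_integral_cart_prod[where g="\<lambda>_. normal_density 0 \<sigma>"])
  apply (auto simp: nn_normal)
  done

lemma sets_gauss[simp]: "sets (gauss_noise \<sigma>) = sets borel"
  by (simp add: gauss_noise_def)

lemma gauss_integrable_coord:
  assumes "\<sigma> > 0"
  shows "integrable (gauss_noise \<sigma>) (\<lambda>e::real^'n::finite. e $ i)"
proof -
  define g where "g k = (if k = i then (\<lambda>x. \<bar>x\<bar> * normal_density 0 \<sigma> x) else normal_density 0 \<sigma>)" for k
  have gm[measurable]: "g k \<in> borel_measurable borel" for k by (simp add: g_def)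
  have gn: "0 \<le> g k x" for k x by (simp add: g_def)
  have eq: "ennreal (norm (e $ i)) * (\<Prod>k\<in>UNIV. ennreal (normal_density 0 \<sigma> (e $ k)))
        = (\<Prod>k\<in>UNIV. ennreal (g k (e $ k)))" for e :: "real^'n"
  proof -
    have "(\<Prod>k\<in>UNIV. ennreal (g k (e $ k))) = ennreal (g i (e $ i)) * (\<Prod>k\<in>UNIV-{i}. ennreal (g k (e $ k)))"
      by (subst prod.remove[of _ i]) auto
    also have "\<dots> = ennreal \<bar>e $ i\<bar> * ennreal (normal_density 0 \<sigma> (e $ i)) * (\<Prod>k\<in>UNIV-{i}. ennreal (normal_density 0 \<sigma> (e $ k)))"
      by (simp add: g_def ennreal_mult)
    also have "\<dots> = ennreal \<bar>e $ i\<bar> * (\<Prod>k\<in>UNIV. ennreal (normal_density 0 \<sigma> (e $ k)))"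
      by (subst (2) prod.remove[of _ i]) (auto simp: mult.assoc)
    finally show ?thesis by simp
  qed
  have fin1: "(\<integral>\<^sup>+x. ennreal (\<bar>x\<bar> * normal_density 0 \<sigma> x) \<partial>lborel) < \<infinity>"
  proof -
    have e: "(\<lambda>x. \<bar>x\<bar> * normal_density 0 \<sigma> x) = (\<lambda>x. normal_density 0 \<sigma> x * \<bar>x - 0\<bar>^1)"
      by (auto simp: fun_eq_iff mult.commute)
    have "integrable lborel (\<lambda>x. \<bar>x\<bar> * normal_density 0 \<sigma> x)"
      unfolding e using assms by (rule integrable_normal_moment_abs)
    then show ?thesis
      by (subst nn_integral_eq_integral) auto
  qed
  have "(\<integral>\<^sup>+e. ennreal (norm (e $ i)) \<partial>gauss_noise \<sigma>) =
        (\<integral>\<^sup>+e. (\<Prod>k\<in>UNIV. ennreal (g k (e $ k))) \<partial>(lborel::(real^'n) measure))"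
    unfolding gauss_noise_def
    by (subst nn_integral_density) (auto simp: eq[symmetric] mult.commute)
  also have "\<dots> = (\<Prod>k\<in>UNIV. \<integral>\<^sup>+x. ennreal (g k x) \<partial>lborel)"
    by (rule nn_integral_cart_prod) (auto simp: gn)
  also have "\<dots> < \<infinity>"
  proof -
    have "(\<integral>\<^sup>+x. ennreal (g k x) \<partial>lborel) \<noteq> top" for k
      using fin1 assms by (cases "k = i") (auto simp: g_def nn_normal)
    then have "(\<Prod>k\<in>UNIV. \<integral>\<^sup>+x. ennreal (g k x) \<partial>lborel) \<noteq> top"
      by (subst ennreal_prod_eq_top) blast
    then show ?thesis by (simp add: less_top)
  qed
  moreover have "(\<lambda>e::real^'n. e $ i) \<in> borel_measurable (gauss_noise \<sigma>)"
    by (simp add: measurable_cong_sets[OF sets_gauss refl])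
  ultimately show ?thesis
    by (subst integrable_iff_bounded) auto
qed

lemma gauss_mean_coord:
  assumes "\<sigma> > 0"
  shows "(\<integral>e. e $ i \<partial>(gauss_noise \<sigma> :: (real^'n::finite) measure)) = 0"
proof -
  define F where "F e = gd \<sigma> e * e $ i" for e :: "real^'n"
  have Fm[measurable]: "F \<in> borel_measurable borel" unfolding F_def by measurable
  have I: "(\<integral>e. e $ i \<partial>(gauss_noise \<sigma> :: (real^'n) measure)) = (\<integral>e. F e \<partial>lborel)"
    unfolding gauss_noise_eq F_def
    by (subst integral_density) (auto simp: gd_nonneg)
  have gdm: "gd \<sigma> (- e) = gd \<sigma> e" for e :: "real^'n"
    by (simp add: gd_def normal_density_def)
  have "(lborel :: (real^'n) measure) = density (distr lborel borel (\<lambda>x. (0::real^'n) + (-1::real) *\<^sub>R x)) (\<lambda>_. \<bar>-1::real\<bar>^DIM(real^'n))"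
    by (rule lborel_affine) simp
  then have L: "(lborel :: (real^'n) measure) = distr lborel borel uminus"
    by (simp add: density_1)
  have "(\<integral>e. F e \<partial>lborel) = (\<integral>e. F e \<partial>(distr lborel borel uminus :: (real^'n) measure))"
    using L by simp
  also have "\<dots> = (\<integral>e. F (- e) \<partial>lborel)"
    by (rule integral_distr) auto
  also have "\<dots> = (\<integral>e. - F e \<partial>lborel)"
    by (simp add: F_def gdm)
  also have "\<dots> = - (\<integral>e. F e \<partial>lborel)" by simp
  finally show ?thesis using I by simp
qed

definition penrose :: "real^'m^'k \<Rightarrow> real^'k^'m \<Rightarrow> bool" where
  "penrose A B \<longleftrightarrow> A ** B ** A = A \<and> B ** A ** B = B \<and>
                      transpose (A ** B) = A ** B \<and> transpose (B ** A) = B ** A"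

lemma penrose_unique:
  fixes A :: "real^'m::finite^'k::finite"
  assumes "penrose A B1" "penrose A B2"
  shows "B1 = B2"
proof -
  have a1: "A ** B1 ** A = A" "B1 ** A ** B1 = B1" "transpose (A ** B1) = A ** B1" "transpose (B1 ** A) = B1 ** A"
    using assms(1) by (auto simp: penrose_def)
  have a2: "A ** B2 ** A = A" "B2 ** A ** B2 = B2" "transpose (A ** B2) = A ** B2" "transpose (B2 ** A) = B2 ** A"
    using assms(2) by (auto simp: penrose_def)
  have "B1 = B1 ** (A ** B1)" using a1(2) by (simp only: matrix_mul_assoc)
  also have "\<dots> = B1 ** transpose (A ** B1)" by (simp only: a1(3))
  also have "\<dots> = B1 ** (transpose B1 ** transpose A)" by (simp only: matrix_transpose_mul)
  also have "\<dots> = B1 ** (transpose B1 ** transpose (A ** B2 ** A))" by (simp only: a2(1))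
  also have "\<dots> = B1 ** (transpose B1 ** transpose A) ** (transpose B2 ** transpose A)"
    by (simp only: matrix_transpose_mul matrix_mul_assoc)
  also have "\<dots> = B1 ** transpose (A ** B1) ** transpose (A ** B2)"
    by (simp only: matrix_transpose_mul)
  also have "\<dots> = B1 ** A ** B1 ** (A ** B2)"
    by (simp only: a1(3) a2(3) matrix_mul_assoc)
  also have "\<dots> = B1 ** A ** B2" by (simp only: a1(2) matrix_mul_assoc)
  finally have e1: "B1 = B1 ** A ** B2" .
  have t3: "transpose (X ** Y ** Z) = transpose Z ** transpose Y ** transpose X" for X :: "real^'m^'k" and Y :: "real^'k^'m" and Z :: "real^'m^'k"
    by (simp only: matrix_transpose_mul matrix_mul_assoc)
  have "B2 = (B2 ** A) ** B2" using a2(2) by simp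
  also have "\<dots> = transpose (B2 ** A) ** B2" by (simp only: a2(4))
  also have "\<dots> = transpose A ** transpose B2 ** B2" by (simp only: matrix_transpose_mul)
  also have "\<dots> = transpose (A ** B1 ** A) ** transpose B2 ** B2" by (simp only: a1(1))
  also have "\<dots> = transpose A ** transpose B1 ** (transpose A ** transpose B2) ** B2"
    by (simp only: t3 matrix_mul_assoc)
  also have "\<dots> = transpose (B1 ** A) ** transpose (B2 ** A) ** B2"
    by (simp only: matrix_transpose_mul)
  also have "\<dots> = B1 ** A ** (B2 ** A ** B2)"
    by (simp only: a1(4) a2(4) matrix_mul_assoc)
  also have "\<dots> = B1 ** A ** B2" by (simp only: a2(2))
  finally show ?thesis using e1 by simp
qed

lemma matrix_inv_props:
  fixes A :: "real^'n::finite^'n"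
  assumes "invertible A"
  shows "A ** matrix_inv A = mat 1" "matrix_inv A ** A = mat 1"
proof -
  have "\<exists>A'. A ** A' = mat 1 \<and> A' ** A = mat 1" using assms by (simp add: invertible_def)
  from someI_ex[OF this] show "A ** matrix_inv A = mat 1" "matrix_inv A ** A = mat 1"
    by (simp_all add: matrix_inv_def)
qed

lemma inj_imp_invertible:
  fixes A :: "real^'n::finite^'n"
  assumes "\<And>x. A *v x = 0 \<Longrightarrow> x = 0"
  shows "invertible A"
proof -
  have "inj ((*v) A)"
    by (rule injI) (metis assms eq_iff_diff_eq_0 matrix_vector_mult_diff_distrib)
  then show ?thesis
    using matrix_left_invertible_injective invertible_left_inverse by blast
qed

lemma sym_inner:
  fixes S :: "real^'n::finite^'n"
  assumes "transpose S = S"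
  shows "(S *v x) \<bullet> y = x \<bullet> (S *v y)"
proof -
  have "(S *v x) \<bullet> y = (x v* S) \<bullet> y"
    using transpose_matrix_vector[of S x] assms by simp
  also have "\<dots> = x \<bullet> (S *v y)" by (rule dot_lmul_matrix)
  finally show ?thesis .
qed

lemma penrose_sym_exists:
  fixes A :: "real^'n::finite^'n"
  assumes symA: "transpose A = A"
  shows "\<exists>B. penrose A B"
proof -
  define N where "N = {x. A *v x = 0}"
  have subN: "subspace N"
    unfolding N_def subspace_def by (auto simp: algebra_simps)
  obtain Bs where Bs: "Bs \<subseteq> N" "pairwise orthogonal Bs" "\<And>x. x \<in> Bs \<Longrightarrow> norm x = 1"
    "independent Bs" "span Bs = N"
    using orthonormal_basis_subspace[OF subN] by metis
  have finB: "finite Bs" using Bs(4) by (simp add: independent_imp_finite)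
  define Q :: "real^'n^'n" where "Q = (\<chi> i j. \<Sum>b\<in>Bs. b$i * b$j)"
  have Qv: "Q *v x = (\<Sum>b\<in>Bs. (b \<bullet> x) *\<^sub>R b)" for x
    by (simp add: Q_def vec_eq_iff matrix_vector_mult_def inner_vec_def sum_distrib_left
        sum_distrib_right sum_component) (subst sum.swap, simp add: mult_ac)
  have Qsym: "transpose Q = Q"
    by (simp add: Q_def transpose_def vec_eq_iff mult.commute)
  have QN: "Q *v x \<in> N" for x
    unfolding Qv by (rule subspace_sum[OF subN]) (use Bs(1) subN in \<open>auto intro: subspace_mul\<close>)
  have Qfix: "Q *v x = x" if "x \<in> N" for x
  proof -
    from that Bs(5) have "x \<in> span Bs" by simp
    then obtain u where u: "(\<Sum>v\<in>Bs. u v *\<^sub>R v) = x"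
      using span_finite[OF finB] by auto
    have "b \<bullet> x = u b" if "b \<in> Bs" for b
    proof -
      have "b \<bullet> x = (\<Sum>v\<in>Bs. u v * (b \<bullet> v))" unfolding u[symmetric] by (simp add: inner_sum_right)
      also have "\<dots> = (\<Sum>v\<in>Bs. if v = b then u b * (b \<bullet> b) else 0)"
        by (rule sum.cong) (use Bs(2) that in \<open>auto simp: pairwise_def orthogonal_def inner_commute\<close>)
      also have "\<dots> = u b * (b \<bullet> b)" using finB that by simp
      also have "b \<bullet> b = 1" using Bs(3)[OF that] by (simp add: dot_square_norm)
      finally show ?thesis by simp
    qed
    then have "Q *v x = (\<Sum>v\<in>Bs. u v *\<^sub>R v)" unfolding Qv by (intro sum.cong) auto
    then show ?thesis using u by simp
  qed
  have AQv: "A *v (Q *v x) = 0" for x using QN[of x] by (simp add: N_def)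
  have AQ: "A ** Q = 0"
    by (subst matrix_eq) (auto simp: matrix_vector_mul_assoc[symmetric] AQv)
  have QA: "Q ** A = 0"
  proof -
    have "Q ** A = transpose (A ** Q)" by (simp add: matrix_transpose_mul Qsym symA)
    then show ?thesis using AQ by (simp add: transpose_def vec_eq_iff)
  qed
  have QQ: "Q ** Q = Q"
    by (subst matrix_eq) (auto simp: matrix_vector_mul_assoc[symmetric] Qfix QN)
  define C where "C = A + Q"
  have Cinj: "x = 0" if "C *v x = 0" for x
  proof -
    have "Q *v (C *v x) = 0" using that by simp
    then have "Q *v x = 0"
      by (simp add: C_def algebra_simps matrix_vector_mul_assoc QA QQ)
    then have "A *v x = 0" using that by (simp add: C_def algebra_simps)
    then have "Q *v x = x" using Qfix by (simp add: N_def)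
    then show ?thesis using \<open>Q *v x = 0\<close> by simp
  qed
  have invC: "invertible C" by (rule inj_imp_invertible) (rule Cinj)
  define D where "D = matrix_inv C"
  have CD: "C ** D = mat 1" and DC: "D ** C = mat 1" using matrix_inv_props[OF invC] by (simp_all add: D_def)
  have vCD: "C *v (D *v x) = x" for x using CD by (simp add: matrix_vector_mul_assoc)
  have vDC: "D *v (C *v x) = x" for x using DC by (simp add: matrix_vector_mul_assoc)
  have vAQ: "A *v (Q *v x) = 0" for x using AQ by (simp add: matrix_vector_mul_assoc)
  have vQA: "Q *v (A *v x) = 0" for x using QA by (simp add: matrix_vector_mul_assoc)
  have vQQ: "Q *v (Q *v x) = Q *v x" for x using QQ by (simp add: matrix_vector_mul_assoc)
  have vCQ: "C *v (Q *v x) = Q *v x" for x by (simp add: C_def algebra_simps vAQ vQQ)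
  have vDQ: "D *v (Q *v x) = Q *v x" for x by (metis vCQ vDC)
  have vQC: "Q *v (C *v x) = Q *v x" for x by (simp add: C_def algebra_simps vQA vQQ)
  have vQD: "Q *v (D *v x) = Q *v x" for x by (metis vQC vCD)
  have vA: "A *v x = C *v x - Q *v x" for x by (simp add: C_def algebra_simps)
  define B where "B = D - Q"
  have AB: "A ** B = mat 1 - Q"
    by (subst matrix_eq) (auto simp: matrix_vector_mul_assoc[symmetric] B_def algebra_simps vA vCD vQD vQQ vCQ vDQ)
  have BA: "B ** A = mat 1 - Q"
    by (subst matrix_eq) (auto simp: matrix_vector_mul_assoc[symmetric] B_def algebra_simps vA vDC vQA vDQ vQC vCQ vQQ)
  have tIQ: "transpose (mat 1 - Q) = mat 1 - Q"
    using Qsym by (simp add: transpose_def vec_eq_iff mat_def)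
  have "A ** B ** A = A"
    unfolding AB by (subst matrix_eq) (auto simp: matrix_vector_mul_assoc[symmetric] algebra_simps vQA vA vQC vQQ)
  moreover have "B ** A ** B = B"
    unfolding BA by (subst matrix_eq) (auto simp: matrix_vector_mul_assoc[symmetric] B_def algebra_simps vQD vQQ vDQ)
  ultimately have "penrose A B" unfolding penrose_def by (simp only: AB BA tIQ simp_thms)
  then show ?thesis by blast
qed

lemma mp_pinv_sym:
  fixes A :: "real^'n::finite^'n"
  assumes "transpose A = A"
  shows "penrose A (mp_pinv A)"
proof -
  obtain B where B: "penrose A B" using penrose_sym_exists[OF assms] by blast
  have "mp_pinv A = B"
    unfolding mp_pinv_def
  proof (rule the_equality)
    show "A ** B ** A = A \<and> B ** A ** B = B \<and> transpose (A ** B) = A ** B \<and> transpose (B ** A) = B ** A"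
      using B unfolding penrose_def .
  next
    fix B' assume "A ** B' ** A = A \<and> B' ** A ** B' = B' \<and> transpose (A ** B') = A ** B' \<and> transpose (B' ** A) = B' ** A"
    then have "penrose A B'" unfolding penrose_def .
    then show "B' = B" using penrose_unique B by blast
  qed
  then show ?thesis using B by simp
qed

lemma mm_diff_l: "(A::real^'n::finite^'m) ** (B - C) = A ** B - A ** C"
  by (simp add: matrix_matrix_mult_def vec_eq_iff sum_subtractf right_diff_distrib)
lemma mm_diff_r: "((A::real^'n::finite^'m) - B) ** C = A ** C - B ** C"
  by (simp add: matrix_matrix_mult_def vec_eq_iff sum_subtractf left_diff_distrib)
lemma transpose_diff: "transpose ((A::real^'n^'m) - B) = transpose A - transpose B"
  by (simp add: transpose_def vec_eq_iff)

lemma EEt_zero: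
  fixes E :: "real^'p::finite^'n::finite"
  assumes "E ** transpose E = 0"
  shows "E = 0"
proof -
  have "(\<Sum>k\<in>UNIV. E$i$k * E$i$k) = 0" for i
    using arg_cong[OF assms, of "\<lambda>M. M$i$i"] by (simp add: matrix_matrix_mult_def transpose_def)
  then have "\<forall>k\<in>UNIV. E$i$k * E$i$k = 0" for i
    by (subst sum_nonneg_eq_0_iff[symmetric]) auto
  then show ?thesis by (simp add: vec_eq_iff)
qed

lemma X_proj:
  fixes X :: "real^'p::finite^'n::finite"
  shows "X ** proj_X X = X"
proof -
  define A where "A = X ** transpose X"
  have symA: "transpose A = A" by (simp add: A_def matrix_transpose_mul)
  define Bp where "Bp = mp_pinv A"
  have pen: "penrose A Bp" unfolding Bp_def by (rule mp_pinv_sym[OF symA])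
  have ABA: "A ** Bp ** A = A" and tAB: "transpose (A ** Bp) = A ** Bp"
    using pen by (auto simp: penrose_def)
  have AAB: "A ** (A ** Bp) = A"
  proof -
    have "A ** (A ** Bp) = A ** transpose (A ** Bp)" by (simp only: tAB)
    also have "\<dots> = transpose (A ** Bp ** A)" by (simp only: matrix_transpose_mul symA matrix_mul_assoc)
    also have "\<dots> = A" by (simp only: ABA symA)
    finally show ?thesis .
  qed
  have P: "proj_X X = transpose X ** Bp ** X" by (simp add: proj_X_def Bp_def A_def)
  define E where "E = X - A ** Bp ** X"
  have tE: "transpose E = transpose X - transpose X ** (A ** Bp)"
    unfolding E_def transpose_diff matrix_transpose_mul[of "A ** Bp" X] tAB ..
  have "E ** transpose E = X ** transpose X - X ** transpose X ** (A ** Bp) - A ** Bp ** X ** transpose X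
        + A ** Bp ** X ** (transpose X ** (A ** Bp))"
    unfolding tE unfolding E_def by (simp only: mm_diff_l mm_diff_r matrix_mul_assoc) (simp add: algebra_simps)
  also have "\<dots> = A - A ** (A ** Bp) - A ** Bp ** A + A ** Bp ** (A ** (A ** Bp))"
    by (simp only: A_def matrix_mul_assoc)
  also have "\<dots> = 0" by (simp only: AAB ABA) simp
  finally have "E = 0" by (rule EEt_zero)
  then have "A ** Bp ** X = X" by (simp add: E_def)
  then show ?thesis by (simp add: P A_def matrix_mul_assoc)
qed

lemma eig_finite:
  fixes S :: "real^'n::finite^'n"
  assumes symS: "transpose S = S"
  shows "finite {\<mu>. \<mu> \<noteq> 0 \<and> (\<exists>v. v \<noteq> 0 \<and> S *v v = \<mu> *\<^sub>R v)}" (is "finite ?E")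
proof -
  define ev where "ev \<mu> = (SOME v. v \<noteq> 0 \<and> S *v v = \<mu> *\<^sub>R v)" for \<mu>
  have ev: "ev \<mu> \<noteq> 0 \<and> S *v ev \<mu> = \<mu> *\<^sub>R ev \<mu>" if "\<mu> \<in> ?E" for \<mu>
  proof -
    have "\<exists>v. v \<noteq> 0 \<and> S *v v = \<mu> *\<^sub>R v" using that by auto
    then show ?thesis unfolding ev_def by (rule someI_ex)
  qed
  have inj: "inj_on ev ?E"
  proof (rule inj_onI)
    fix a b assume a: "a \<in> ?E" and b: "b \<in> ?E" and e: "ev a = ev b"
    have "a *\<^sub>R ev a = b *\<^sub>R ev a" using ev[OF a] ev[OF b] e by metis
    then show "a = b" using ev[OF a] by (simp add: scaleR_cancel_right)
  qed
  have orth: "pairwise orthogonal (ev ` ?E)"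
    unfolding pairwise_def orthogonal_def
  proof (intro ballI impI)
    fix x y assume x: "x \<in> ev ` ?E" and y: "y \<in> ev ` ?E" and ne: "x \<noteq> y"
    obtain a where a: "a \<in> ?E" and xa: "x = ev a" using x by blast
    obtain b where b: "b \<in> ?E" and yb: "y = ev b" using y by blast
    have "a \<noteq> b" using ne xa yb by auto
    have "a * (ev a \<bullet> ev b) = (S *v ev a) \<bullet> ev b" using ev[OF a] by simp
    also have "\<dots> = ev a \<bullet> (S *v ev b)" by (rule sym_inner[OF symS])
    also have "\<dots> = b * (ev a \<bullet> ev b)" using ev[OF b] by simp
    finally have "ev a \<bullet> ev b = 0" using \<open>a \<noteq> b\<close> by (metis mult_right_cancel)
    then show "x \<bullet> y = 0" using xa yb by simp
  qed
  have "0 \<notin> ev ` ?E" using ev by fastforce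
  then have "independent (ev ` ?E)" using orth pairwise_orthogonal_independent by blast
  then have "finite (ev ` ?E)" by (simp add: independent_imp_finite)
  then show ?thesis using inj finite_imageD by blast
qed

lemma quad_nonneg_zero:
  fixes c d :: real
  assumes "\<And>t. 0 \<le> 2 * t * c + t^2 * d"
  shows "c = 0"
proof (rule ccontr)
  assume "c \<noteq> 0"
  define k where "k = \<bar>d\<bar> + 1"
  have k: "k \<ge> 1" by (simp add: k_def)
  have "0 \<le> 2 * (-c/k) * c + (-c/k)^2 * d" by (rule assms)
  then have "0 \<le> (2 * (-c) * c * k + c^2 * d) / k^2"
    using k by (simp add: field_simps power2_eq_square)
  then have "0 \<le> 2 * (-c) * c * k + c^2 * d"
    using k by (simp add: zero_le_divide_iff)
  moreover have "c^2 * d \<le> c^2 * \<bar>d\<bar>" by (simp add: mult_left_mono)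
  moreover have "c^2 > 0" using \<open>c \<noteq> 0\<close> by simp
  moreover have "2 * (-c) * c * k = -2 * c^2 - 2 * (c^2 * \<bar>d\<bar>)"
    by (simp add: k_def algebra_simps power2_eq_square)
  moreover have "c^2 * \<bar>d\<bar> \<ge> 0" by simp
  ultimately show False by linarith
qed

lemma norm_add_sq:
  fixes a b :: "'a::real_inner"
  shows "(norm (a + t *\<^sub>R b))^2 = (norm a)^2 + 2 * t * (a \<bullet> b) + t^2 * (norm b)^2"
  by (simp only: power2_norm_eq_inner) (simp add: inner_add_left inner_add_right inner_commute algebra_simps power2_eq_square)

lemma eig_lower:
  fixes S :: "real^'n::finite^'n"
  assumes symS: "transpose S = S" and psd: "\<And>x. 0 \<le> x \<bullet> (S *v x)"
    and subV: "subspace V" and inv: "\<And>w. w \<in> V \<Longrightarrow> S *v w \<in> V"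
    and injV: "\<And>w. w \<in> V \<Longrightarrow> S *v w = 0 \<Longrightarrow> w = 0"
    and ne: "v0 \<in> V" "v0 \<noteq> 0"
  shows "\<exists>s>0. (\<exists>v. v \<noteq> 0 \<and> S *v v = s *\<^sub>R v) \<and> (\<forall>w\<in>V. s * norm w \<le> norm (S *v w))"
proof -
  define K where "K = V \<inter> sphere 0 1"
  have cK: "compact K" unfolding K_def
    by (rule closed_Int_compact) (auto intro: closed_subspace subV)
  have "v0 /\<^sub>R norm v0 \<in> K" using ne subV by (auto simp: K_def subspace_scale)
  then have neK: "K \<noteq> {}" by blast
  have cont: "continuous_on K (\<lambda>w. (norm (S *v w))^2)"
    by (intro continuous_intros linear_continuous_on) auto
  obtain w0 where w0K: "w0 \<in> K" and w0min: "\<And>y. y \<in> K \<Longrightarrow> (norm (S *v w0))^2 \<le> (norm (S *v y))^2"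
    using continuous_attains_inf[OF cK neK cont] by blast
  define m where "m = (norm (S *v w0))^2"
  have w0V: "w0 \<in> V" and nw0: "norm w0 = 1" using w0K by (auto simp: K_def)
  have "S *v w0 \<noteq> 0" using injV[OF w0V] nw0 by auto
  then have mpos: "m > 0" by (simp add: m_def)
  have claim1: "m * (norm u)^2 \<le> (norm (S *v u))^2" if "u \<in> V" for u
  proof (cases "u = 0")
    case True then show ?thesis by simp
  next
    case False
    have "u /\<^sub>R norm u \<in> K" using that False subV by (auto simp: K_def subspace_scale)
    then have "m \<le> (norm (S *v (u /\<^sub>R norm u)))^2" using w0min by (simp add: m_def)
    also have "\<dots> = (norm (S *v u))^2 / (norm u)^2"
      by (simp add: matrix_vector_mult_scaleR power_divide power_mult_distrib divide_inverse power_inverse)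
    finally show ?thesis using False by (simp add: field_simps)
  qed
  have claim2: "(S *v (S *v w0) - m *\<^sub>R w0) \<bullet> v = 0" if vV: "v \<in> V" for v
  proof -
    define c where "c = (S *v w0) \<bullet> (S *v v) - m * (w0 \<bullet> v)"
    define d where "d = (norm (S *v v))^2 - m * (norm v)^2"
    have "0 \<le> 2 * t * c + t^2 * d" for t
    proof -
      have "w0 + t *\<^sub>R v \<in> V" using w0V vV subV by (simp add: subspace_add subspace_scale)
      from claim1[OF this] have "m * (norm (w0 + t *\<^sub>R v))^2 \<le> (norm (S *v w0 + t *\<^sub>R (S *v v)))^2"
        by (simp add: algebra_simps)
      moreover have "(norm (w0 + t *\<^sub>R v))^2 = 1 + 2 * t * (w0 \<bullet> v) + t^2 * (norm v)^2"
        using nw0 by (simp add: norm_add_sq)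
      moreover have "(norm (S *v w0 + t *\<^sub>R (S *v v)))^2 = m + 2 * t * ((S *v w0) \<bullet> (S *v v)) + t^2 * (norm (S *v v))^2"
        by (simp add: m_def norm_add_sq)
      ultimately show ?thesis by (simp add: c_def d_def algebra_simps)
    qed
    then have "c = 0" by (rule quad_nonneg_zero)
    moreover have "(S *v w0) \<bullet> (S *v v) = (S *v (S *v w0)) \<bullet> v" using sym_inner[OF symS] by simp
    ultimately show ?thesis by (simp add: c_def inner_diff_left)
  qed
  have "S *v (S *v w0) - m *\<^sub>R w0 \<in> V" using inv w0V subV by (simp add: subspace_diff subspace_scale)
  from claim2[OF this] have SS: "S *v (S *v w0) = m *\<^sub>R w0" by simp
  define s where "s = sqrt m"
  have spos: "s > 0" and ss: "s * s = m" using mpos by (auto simp: s_def)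
  define u where "u = S *v w0 + s *\<^sub>R w0"
  have unz: "u \<noteq> 0"
  proof
    assume "u = 0"
    then have "S *v w0 = - s *\<^sub>R w0" by (simp add: u_def eq_neg_iff_add_eq_0)
    then have "w0 \<bullet> (S *v w0) = - s * (w0 \<bullet> w0)" by simp
    also have "w0 \<bullet> w0 = 1" using nw0 by (simp add: dot_square_norm)
    finally show False using psd[of w0] spos by simp
  qed
  have su: "S *v u = s *\<^sub>R u"
    by (simp add: u_def algebra_simps SS ss[symmetric] matrix_vector_mult_scaleR)
  have bnd: "\<forall>w\<in>V. s * norm w \<le> norm (S *v w)"
  proof
    fix w assume "w \<in> V"
    from claim1[OF this] have "(s * norm w)^2 \<le> (norm (S *v w))^2"
      by (simp add: power_mult_distrib ss[symmetric] power2_eq_square mult_ac)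
    then show "s * norm w \<le> norm (S *v w)"
      using spos by (simp add: power2_le_iff_abs_le)
  qed
  have "\<exists>v. v \<noteq> 0 \<and> S *v v = s *\<^sub>R v" using su unz by blast
  then show ?thesis using spos bnd by blast
qed

lemma inner_transpose_mv:
  fixes X :: "real^'p::finite^'n::finite"
  shows "x \<bullet> (transpose X *v y) = (X *v x) \<bullet> y"
proof -
  have "x \<bullet> (transpose X *v y) = (y v* X) \<bullet> x" by (simp only: transpose_matrix_vector inner_commute)
  also have "\<dots> = y \<bullet> (X *v x)" by (rule dot_lmul_matrix)
  finally show ?thesis by (simp add: inner_commute)
qed

lemma Sigma_mv:
  fixes X :: "real^'p::finite^'n::finite"
  shows "Sigma_hat X *v x = transpose X *v (inverse (real CARD('n)) *\<^sub>R (X *v x))"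
  by (simp add: Sigma_hat_def scaleR_matrix_vector_assoc[symmetric] matrix_vector_mul_assoc[symmetric]
      matrix_vector_mult_scaleR)

lemma Sigma_sym:
  fixes X :: "real^'p::finite^'n::finite"
  shows "transpose (Sigma_hat X) = Sigma_hat X"
  by (simp add: Sigma_hat_def transpose_scalar matrix_transpose_mul)

lemma Sigma_quad:
  fixes X :: "real^'p::finite^'n::finite"
  shows "x \<bullet> (Sigma_hat X *v x) = inverse (real CARD('n)) * (norm (X *v x))^2"
  by (simp only: Sigma_mv inner_transpose_mv) (simp add: power2_norm_eq_inner)

lemma Sigma_psd:
  fixes X :: "real^'p::finite^'n::finite"
  shows "0 \<le> x \<bullet> (Sigma_hat X *v x)"
  by (simp add: Sigma_quad)

lemma smat_mv: "((c::real) *\<^sub>R mat 1) *v x = c *\<^sub>R (x::real^'n::finite)"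
  by (simp add: scaleR_matrix_vector_assoc[symmetric])

lemma ridge_inv:
  fixes X :: "real^'p::finite^'n::finite"
  assumes "lam > 0"
  shows "invertible (Sigma_hat X + lam *\<^sub>R mat 1)"
proof (rule inj_imp_invertible)
  fix x :: "real^'p" assume "(Sigma_hat X + lam *\<^sub>R mat 1) *v x = 0"
  then have "Sigma_hat X *v x + lam *\<^sub>R x = 0" by (simp add: matrix_vector_mult_add_rdistrib smat_mv)
  then have "x \<bullet> (Sigma_hat X *v x + lam *\<^sub>R x) = 0" by simp
  then have "x \<bullet> (Sigma_hat X *v x) + lam * (x \<bullet> x) = 0" by (simp add: inner_add_right)
  moreover have "0 \<le> x \<bullet> (Sigma_hat X *v x)" by (rule Sigma_psd)
  moreover have "0 \<le> x \<bullet> x" by simp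
  ultimately have "lam * (x \<bullet> x) = 0" using assms
    by (smt (verit) mult_nonneg_nonneg)
  then show "x = 0" using assms by simp
qed

lemma bias_bound:
  fixes X :: "real^'p::finite^'n::finite" and beta0 :: "real^'p"
  assumes lam: "lam > 0" and sig: "\<sigma> > 0" and Omin: "Omega_min X lam > 0"
  shows "a_coef X lam \<sigma> j * \<bar>(matrix_inv (Sigma_hat X + lam *\<^sub>R mat 1) *v (Sigma_hat X *v beta0)) $ j - (proj_X X *v beta0) $ j\<bar>
     \<le> lam / sqrt (Omega_min X lam) * sqrt (real CARD('n)) / \<sigma> * norm (proj_X X *v beta0)
                    * inverse (min_nonzero_eig (Sigma_hat X))"
proof -
  define S where "S = Sigma_hat X"
  define Rm where "Rm = matrix_inv (S + lam *\<^sub>R mat 1)"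
  define th where "th = proj_X X *v beta0"
  define n where "n = real CARD('n)"
  have npos: "n > 0" by (simp add: n_def)
  have symS: "transpose S = S" by (simp add: S_def Sigma_sym)
  have psd: "\<And>x. 0 \<le> x \<bullet> (S *v x)" by (simp add: S_def Sigma_psd)
  have RI: "(S + lam *\<^sub>R mat 1) ** Rm = mat 1" "Rm ** (S + lam *\<^sub>R mat 1) = mat 1"
    using matrix_inv_props[OF ridge_inv[OF lam]] by (simp_all add: Rm_def S_def)
  define V where "V = range (\<lambda>y. transpose X *v y)"
  have subV: "subspace V" unfolding subspace_def
  proof (intro conjI ballI allI)
    show "0 \<in> V" unfolding V_def by (rule range_eqI[of _ _ 0]) simp
  next
    fix x y assume "x \<in> V" "y \<in> V"
    then obtain a b where "x = transpose X *v a" "y = transpose X *v b" by (auto simp: V_def)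
    then show "x + y \<in> V" unfolding V_def by (intro range_eqI[of _ _ "a + b"]) (simp add: matrix_vector_right_distrib)
  next
    fix c :: real and x assume "x \<in> V"
    then obtain a where "x = transpose X *v a" by (auto simp: V_def)
    then show "c *\<^sub>R x \<in> V" unfolding V_def by (intro range_eqI[of _ _ "c *\<^sub>R a"]) (simp add: matrix_vector_mult_scaleR)
  qed
  have SV: "S *v w \<in> V" for w by (simp add: V_def S_def Sigma_mv)
  have injV: "w = 0" if wV0: "w \<in> V" and Sw0: "S *v w = 0" for w
  proof -
    obtain y where y: "w = transpose X *v y" using wV0 unfolding V_def by blast
    have "inverse n * (norm (X *v w))^2 = 0" using Sw0 Sigma_quad[of w X] by (simp add: S_def n_def)
    then have Xw: "X *v w = 0" using npos by simp
    have "w \<bullet> w = w \<bullet> (transpose X *v y)" using y by simp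
    also have "\<dots> = (X *v w) \<bullet> y" by (rule inner_transpose_mv)
    finally have "w \<bullet> w = (X *v w) \<bullet> y" .
    then show ?thesis using Xw by simp
  qed
  have "\<exists>y. transpose X *v y \<noteq> 0"
  proof (rule ccontr)
    assume "\<not> ?thesis"
    then have "transpose X = 0" by (subst matrix_eq) simp
    then have X0: "X = 0" by (metis transpose_transpose transpose_scalar scale_zero_left)
    then have "Omega X lam = 0" by (simp add: Omega_def Sigma_hat_def)
    then have "Omega_min X lam = 0" by (simp add: Omega_min_def)
    then show False using Omin by simp
  qed
  then obtain v0 where v0: "v0 \<in> V" "v0 \<noteq> 0" by (auto simp: V_def)
  obtain s where spos: "s > 0" and sE: "\<exists>v. v \<noteq> 0 \<and> S *v v = s *\<^sub>R v"
      and sb: "\<forall>w\<in>V. s * norm w \<le> norm (S *v w)"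
    using eig_lower[OF symS psd subV SV injV v0] by blast
  define E where "E = {\<mu>. \<mu> \<noteq> 0 \<and> (\<exists>v. v \<noteq> 0 \<and> S *v v = \<mu> *\<^sub>R v)}"
  have finE: "finite E" unfolding E_def by (rule eig_finite[OF symS])
  have sinE: "s \<in> E" using spos sE by (simp add: E_def)
  define mu where "mu = min_nonzero_eig S"
  have mu_eq: "mu = Min E" by (simp add: mu_def min_nonzero_eig_def E_def)
  have mu_le: "mu \<le> s" using finE sinE by (simp add: mu_eq)
  have "mu \<in> E" using finE sinE unfolding mu_eq by (intro Min_in) auto
  then obtain v where v: "v \<noteq> 0" "S *v v = mu *\<^sub>R v" "mu \<noteq> 0" by (auto simp: E_def)
  have "0 \<le> v \<bullet> (S *v v)" by (rule psd)
  then have "0 \<le> mu * (v \<bullet> v)" using v by simp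
  moreover have "v \<bullet> v > 0" using v by simp
  ultimately have mupos: "mu > 0" using v(3) by (simp add: zero_le_mult_iff)
  have mub: "mu * norm w \<le> norm (S *v w)" if "w \<in> V" for w
    using sb that mu_le by (meson mult_right_mono norm_ge_zero order_trans)
  (* theta *)
  have thV: "th \<in> V"
    by (simp add: th_def proj_X_def V_def matrix_vector_mul_assoc[symmetric])
  have Xth: "X *v th = X *v beta0"
    using X_proj[of X] by (simp add: th_def matrix_vector_mul_assoc)
  have Sth: "S *v th = S *v beta0" by (simp add: S_def Sigma_mv Xth)
  define w where "w = Rm *v th"
  have Sw: "S *v w + lam *\<^sub>R w = th"
  proof -
    have "(S + lam *\<^sub>R mat 1) *v w = th" using RI(1) by (simp add: w_def matrix_vector_mul_assoc)
    then show ?thesis by (simp add: matrix_vector_mult_add_rdistrib smat_mv)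
  qed
  have diff: "Rm *v (S *v beta0) - th = - lam *\<^sub>R w"
  proof -
    have "th = Rm *v ((S + lam *\<^sub>R mat 1) *v th)" using RI(2) by (simp add: matrix_vector_mul_assoc)
    also have "\<dots> = Rm *v (S *v th) + lam *\<^sub>R w"
      by (simp add: matrix_vector_mult_add_rdistrib smat_mv matrix_vector_right_distrib
          matrix_vector_mult_scaleR w_def)
    finally show ?thesis using Sth by (simp add: algebra_simps)
  qed
  have wV: "w \<in> V"
  proof -
    have "w = inverse lam *\<^sub>R (th - S *v w)" using Sw lam by (auto simp: algebra_simps)
    then show ?thesis using subV thV SV by (metis subspace_diff subspace_scale)
  qed
  have nSw: "norm (S *v w) \<le> norm th"
  proof -
    have "(norm th)^2 = (norm (S *v w))^2 + 2 * lam * ((S *v w) \<bullet> w) + lam^2 * (norm w)^2"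
      using norm_add_sq[of "S *v w" lam w] Sw by simp
    moreover have "(S *v w) \<bullet> w \<ge> 0" using psd[of w] by (simp add: inner_commute)
    ultimately have "(norm (S *v w))^2 \<le> (norm th)^2" using lam
      by (smt (verit) mult_nonneg_nonneg zero_le_power2)
    then show ?thesis by (simp add: power2_le_iff_abs_le)
  qed
  have nw: "norm w \<le> norm th / mu"
    using mub[OF wV] nSw mupos by (simp add: field_simps)
  have bj: "\<bar>(Rm *v (S *v beta0)) $ j - th $ j\<bar> \<le> lam * (norm th / mu)"
  proof -
    have "\<bar>(Rm *v (S *v beta0)) $ j - th $ j\<bar> = lam * \<bar>w $ j\<bar>"
      using arg_cong[OF diff, of "\<lambda>x. x $ j"] lam by (simp add: abs_mult)
    also have "\<dots> \<le> lam * norm w" using lam component_le_norm_cart[of w j] by simp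
    also have "\<dots> \<le> lam * (norm th / mu)" using nw lam by (intro mult_left_mono) auto
    finally show ?thesis .
  qed
  (* a coefficient *)
  have Ojj: "Omega_min X lam \<le> Omega X lam $ j $ j"
    unfolding Omega_min_def by (rule Min_le) auto
  have aj: "a_coef X lam \<sigma> j \<le> sqrt n / \<sigma> / sqrt (Omega_min X lam)"
    unfolding a_coef_def n_def
    using Ojj Omin sig by (intro divide_left_mono) (auto intro: divide_nonneg_pos)
  have aj0: "0 \<le> a_coef X lam \<sigma> j" unfolding a_coef_def using Ojj Omin sig
    by (intro divide_nonneg_nonneg) auto
  have "a_coef X lam \<sigma> j * \<bar>(Rm *v (S *v beta0)) $ j - th $ j\<bar>
      \<le> (sqrt n / \<sigma> / sqrt (Omega_min X lam)) * (lam * (norm th / mu))"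
    using aj aj0 bj by (intro mult_mono) auto
  also have "\<dots> = lam / sqrt (Omega_min X lam) * sqrt n / \<sigma> * norm th * inverse mu"
    by (simp add: field_simps)
  finally show ?thesis by (simp add: S_def Rm_def th_def n_def mu_def)
qed

lemma gauss_affine_integral:
  fixes k :: "'n::finite \<Rightarrow> real"
  assumes sig: "\<sigma> > 0"
  shows "integrable (gauss_noise \<sigma>) (\<lambda>e::real^'n. c + (\<Sum>i\<in>UNIV. k i * e $ i))"
    and "(\<integral>e. c + (\<Sum>i\<in>UNIV. k i * e $ i) \<partial>(gauss_noise \<sigma> :: (real^'n) measure)) = c"
proof -
  interpret prob_space "gauss_noise \<sigma> :: (real^'n) measure" by (rule gauss_prob[OF sig])
  have ic: "integrable (gauss_noise \<sigma>) (\<lambda>e::real^'n. c)" by simp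
  have ii: "integrable (gauss_noise \<sigma>) (\<lambda>e::real^'n. k i * e $ i)" for i
    using gauss_integrable_coord[OF sig, of i] by simp
  have isum: "integrable (gauss_noise \<sigma>) (\<lambda>e::real^'n. \<Sum>i\<in>UNIV. k i * e $ i)"
    by (rule Bochner_Integration.integrable_sum) (rule ii)
  show "integrable (gauss_noise \<sigma>) (\<lambda>e::real^'n. c + (\<Sum>i\<in>UNIV. k i * e $ i))"
    using ic isum by (rule Bochner_Integration.integrable_add)
  have "(\<integral>e. c + (\<Sum>i\<in>UNIV. k i * e $ i) \<partial>(gauss_noise \<sigma> :: (real^'n) measure))
      = c + (\<Sum>i\<in>UNIV. (\<integral>e. k i * e $ i \<partial>(gauss_noise \<sigma> :: (real^'n) measure)))"
    using ic isum ii by (simp add: integral_sum prob_space)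
  also have "\<dots> = c" by (simp add: gauss_mean_coord[OF sig])
  finally show "(\<integral>e. c + (\<Sum>i\<in>UNIV. k i * e $ i) \<partial>(gauss_noise \<sigma> :: (real^'n) measure)) = c" .
qed

lemma ridge_affine:
  fixes X :: "real^'p::finite^'n::finite"
  shows "ridge X lam (X *v beta0 + e) =
     matrix_inv (Sigma_hat X + lam *\<^sub>R mat 1) *v (Sigma_hat X *v beta0)
     + (matrix_inv (Sigma_hat X + lam *\<^sub>R mat 1) ** (inverse (real CARD('n)) *\<^sub>R transpose X)) *v e"
  by (simp add: ridge_def Sigma_hat_def matrix_vector_right_distrib matrix_vector_mult_scaleR
      scaleR_matrix_vector_assoc[symmetric] matrix_vector_mul_assoc[symmetric] scaleR_right_distrib)

lemma a_coef_nonneg: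
  assumes "\<sigma> > 0" "Omega_min X lam > 0"
  shows "0 \<le> a_coef X lam \<sigma> j"
proof -
  have "Omega_min X lam \<le> Omega X lam $ j $ j"
    unfolding Omega_min_def by (rule Min_le) auto
  then show ?thesis unfolding a_coef_def using assms
    by (intro divide_nonneg_nonneg) auto
qed

lemma Max_le_shift:
  fixes f g :: "'a \<Rightarrow> real"
  assumes "finite G" "G \<noteq> {}" "\<And>j. j \<in> G \<Longrightarrow> f j \<le> g j + c"
  shows "Max (f ` G) \<le> Max (g ` G) + c"
proof -
  have "f j \<le> Max (g ` G) + c" if "j \<in> G" for j
  proof -
    have "g j \<le> Max (g ` G)" using assms(1) that by (intro Max_ge) auto
    then show ?thesis using assms(3)[OF that] by simp
  qed
  then show ?thesis using assms(1,2) by (subst Max_le_iff) auto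
qed

theorem proposition3:
  fixes X :: "real^'p^'n" and beta0 :: "real^'p" and \<sigma> lam \<kappa> :: real
    and beta_init :: "real^'n \<Rightarrow> real^'p" and \<Delta> :: "'p \<Rightarrow> real"
  defines "M \<equiv> gauss_noise \<sigma> :: (real^'n) measure"
  defines "Y \<equiv> (\<lambda>e. X *v beta0 + e)"
  defines "P \<equiv> proj_X X"
  defines "theta0 \<equiv> P *v beta0"
  defines "a \<equiv> a_coef X lam \<sigma>"
  defines "bhat \<equiv> (\<lambda>e. ridge X lam (Y e))"
  defines "b \<equiv> (\<lambda>j. (\<integral>e. bhat e $ j \<partial>M) - theta0 $ j)"
  defines "Z \<equiv> (\<lambda>e j. bhat e $ j - (\<integral>e'. bhat e' $ j \<partial>M))"
  defines "bcorr \<equiv> (\<lambda>e j. bhat e $ j - (\<Sum>k\<in>UNIV-{j}. P $ j $ k * beta_init (Y e) $ k))"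
  defines "ab_inf \<equiv> Max (range (\<lambda>j. a j * \<bar>b j\<bar>))"
  assumes sigma_pos: "\<sigma> > 0"
    and lam_pos: "lam > 0"
    and Omin_pos: "Omega_min X lam > 0"
    and init_meas: "beta_init \<in> borel_measurable borel"
    and Delta_pos: "\<forall>j. \<Delta> j > 0"
    and kappa: "0 < \<kappa>" "\<kappa> < 1"
    and A': "measure M {e. \<forall>j. \<bar>a j * (\<Sum>k\<in>UNIV-{j}. P $ j $ k * (beta_init (Y e) $ k - beta0 $ k))\<bar>
                                  \<le> \<Delta> j} \<ge> 1 - \<kappa>"
  shows "ab_inf \<le> lam / sqrt (Omega_min X lam) * sqrt (real CARD('n)) / \<sigma> * norm theta0
                    * inverse (min_nonzero_eig (Sigma_hat X))
       \<and> measure M {e.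
            (\<forall>j. beta0 $ j = 0 \<longrightarrow> a j * \<bar>bcorr e j\<bar> \<le> a j * \<bar>Z e j\<bar> + \<Delta> j + ab_inf)
          \<and> (\<forall>G. G \<noteq> {} \<and> (\<forall>j\<in>G. beta0 $ j = 0) \<longrightarrow>
                 Max ((\<lambda>j. a j * \<bar>bcorr e j\<bar>) ` G)
                   \<le> Max ((\<lambda>j. a j * \<bar>Z e j\<bar> + \<Delta> j) ` G) + ab_inf)} \<ge> 1 - \<kappa>"
proof -
  define n where "n = real CARD('n)"
  define S where "S = Sigma_hat X"
  define Rm where "Rm = matrix_inv (S + lam *\<^sub>R mat 1)"
  define c where "c = Rm *v (S *v beta0)"
  define K where "K = Rm ** (inverse n *\<^sub>R transpose X)"
  have bhat_eq: "bhat e $ j = c $ j + (\<Sum>i\<in>UNIV. K$j$i * e$i)" for e j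
    unfolding bhat_def Y_def using ridge_affine[of X lam beta0 e]
    by (simp add: c_def K_def Rm_def S_def n_def matrix_vector_mult_def)
  have intb: "(\<integral>e. bhat e $ j \<partial>M) = c $ j" for j
    unfolding M_def bhat_eq by (rule gauss_affine_integral(2)[OF sigma_pos])
  have b_eq: "b j = c $ j - theta0 $ j" for j by (simp add: b_def intb)
  have bias: "a j * \<bar>b j\<bar> \<le> lam / sqrt (Omega_min X lam) * sqrt (real CARD('n)) / \<sigma> * norm theta0
                    * inverse (min_nonzero_eig (Sigma_hat X))" for j
    using bias_bound[OF lam_pos sigma_pos Omin_pos, of j beta0]
    by (simp add: a_def b_eq c_def Rm_def S_def theta0_def P_def)
  have part1: "ab_inf \<le> lam / sqrt (Omega_min X lam) * sqrt (real CARD('n)) / \<sigma> * norm theta0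
                    * inverse (min_nonzero_eig (Sigma_hat X))"
    unfolding ab_inf_def using bias by (subst Max_le_iff) auto
  have a0: "0 \<le> a j" for j using a_coef_nonneg[OF sigma_pos Omin_pos] by (simp add: a_def)
  have abj: "a j * \<bar>b j\<bar> \<le> ab_inf" for j unfolding ab_inf_def by (rule Max_ge) auto
  define Aset where "Aset = {e. \<forall>j. \<bar>a j * (\<Sum>k\<in>UNIV-{j}. P $ j $ k * (beta_init (Y e) $ k - beta0 $ k))\<bar> \<le> \<Delta> j}"
  have pt: "a j * \<bar>bcorr e j\<bar> \<le> a j * \<bar>Z e j\<bar> + \<Delta> j + ab_inf"
    if eA: "e \<in> Aset" and bj0: "beta0 $ j = 0" for e j
  proof -
    define D where "D = (\<Sum>k\<in>UNIV-{j}. P $ j $ k * (beta_init (Y e) $ k - beta0 $ k))"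
    have "theta0 $ j = (\<Sum>k\<in>UNIV. P $ j $ k * beta0 $ k)"
      by (simp add: theta0_def matrix_vector_mult_def)
    also have "\<dots> = P $ j $ j * beta0 $ j + (\<Sum>k\<in>UNIV-{j}. P $ j $ k * beta0 $ k)"
      by (subst sum.remove[of _ j]) auto
    finally have th: "theta0 $ j = (\<Sum>k\<in>UNIV-{j}. P $ j $ k * beta0 $ k)" using bj0 by simp
    have D_eq: "D = (\<Sum>k\<in>UNIV-{j}. P $ j $ k * beta_init (Y e) $ k) - theta0 $ j"
      unfolding D_def th by (simp add: sum_subtractf right_diff_distrib)
    have bc: "bcorr e j = Z e j + b j - D"
      by (simp add: bcorr_def Z_def b_def D_eq)
    have "\<bar>bcorr e j\<bar> \<le> \<bar>Z e j\<bar> + \<bar>b j\<bar> + \<bar>D\<bar>" unfolding bc by linarith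
    then have "a j * \<bar>bcorr e j\<bar> \<le> a j * \<bar>Z e j\<bar> + a j * \<bar>b j\<bar> + a j * \<bar>D\<bar>"
      using a0[of j] by (metis distrib_left mult_left_mono)
    moreover have "a j * \<bar>D\<bar> \<le> \<Delta> j"
    proof -
      have "\<bar>a j\<bar> = a j" using a0[of j] by simp
      moreover have "\<bar>a j * D\<bar> \<le> \<Delta> j" using eA unfolding Aset_def D_def by blast
      ultimately show ?thesis by (simp add: abs_mult)
    qed
    ultimately show ?thesis using abj[of j] by linarith
  qed
  define T' where "T' = {e. \<forall>j. beta0 $ j = 0 \<longrightarrow> a j * \<bar>bcorr e j\<bar> \<le> a j * \<bar>Z e j\<bar> + \<Delta> j + ab_inf}"
  have TT: "{e.
            (\<forall>j. beta0 $ j = 0 \<longrightarrow> a j * \<bar>bcorr e j\<bar> \<le> a j * \<bar>Z e j\<bar> + \<Delta> j + ab_inf)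
          \<and> (\<forall>G. G \<noteq> {} \<and> (\<forall>j\<in>G. beta0 $ j = 0) \<longrightarrow>
                 Max ((\<lambda>j. a j * \<bar>bcorr e j\<bar>) ` G)
                   \<le> Max ((\<lambda>j. a j * \<bar>Z e j\<bar> + \<Delta> j) ` G) + ab_inf)} = T'"
  proof (intro set_eqI iffI)
    fix e assume "e \<in> T'"
    then have h: "\<And>j. beta0 $ j = 0 \<Longrightarrow> a j * \<bar>bcorr e j\<bar> \<le> a j * \<bar>Z e j\<bar> + \<Delta> j + ab_inf"
      by (auto simp: T'_def)
    have "Max ((\<lambda>j. a j * \<bar>bcorr e j\<bar>) ` G) \<le> Max ((\<lambda>j. a j * \<bar>Z e j\<bar> + \<Delta> j) ` G) + ab_inf"
      if "G \<noteq> {}" "\<forall>j\<in>G. beta0 $ j = 0" for G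
      by (rule Max_le_shift) (use that h in auto)
    then show "e \<in> {e.
            (\<forall>j. beta0 $ j = 0 \<longrightarrow> a j * \<bar>bcorr e j\<bar> \<le> a j * \<bar>Z e j\<bar> + \<Delta> j + ab_inf)
          \<and> (\<forall>G. G \<noteq> {} \<and> (\<forall>j\<in>G. beta0 $ j = 0) \<longrightarrow>
                 Max ((\<lambda>j. a j * \<bar>bcorr e j\<bar>) ` G)
                   \<le> Max ((\<lambda>j. a j * \<bar>Z e j\<bar> + \<Delta> j) ` G) + ab_inf)}"
      using h by auto
  qed (auto simp: T'_def)
  have sub: "Aset \<subseteq> T'" using pt by (auto simp: T'_def)
  have mY: "(\<lambda>e. beta_init (Y e)) \<in> borel_measurable borel"
    by (rule measurable_compose[OF _ init_meas]) (simp add: Y_def)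
  have mI[measurable]: "(\<lambda>e. beta_init (Y e) $ k) \<in> borel_measurable borel" for k
    by (rule measurable_compose[OF mY borel_measurable_nth])
  have mB[measurable]: "(\<lambda>e. bhat e $ j) \<in> borel_measurable borel" for j
    unfolding bhat_eq by measurable
  have mT: "T' \<in> sets borel"
  proof -
    have "T' = {e \<in> space borel. \<forall>j. beta0 $ j = 0 \<longrightarrow> a j * \<bar>bcorr e j\<bar> \<le> a j * \<bar>Z e j\<bar> + \<Delta> j + ab_inf}"
      by (simp add: T'_def)
    also have "\<dots> \<in> sets borel" unfolding bcorr_def Z_def by measurable
    finally show ?thesis .
  qed
  interpret prob_space M unfolding M_def by (rule gauss_prob[OF sigma_pos])
  have "1 - \<kappa> \<le> measure M Aset" using A' by (simp add: Aset_def)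
  also have "\<dots> \<le> measure M T'"
    using sub mT by (intro finite_measure_mono) (auto simp: M_def)
  finally have part2: "1 - \<kappa> \<le> measure M T'" .
  show ?thesis using part1 part2 TT by simp
qed

end
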